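(* The bracket $\Big[\sum_{(a,n)}P^{a,n}D_{a,n},\sum_{(b,m)}Q^{b,m}D_{b,m}\Big]=\sum_{(a,n),(b,m)\in\mathcal I\times\mathbb Z}\Big(P^{b,m}\frac{\partial Q^{a,n}}{\partial X^{b,m}}-Q^{b,m}\frac{\partial P^{a,n}}{\partial X^{b,m}}\Big)D_{a,n}$ is well defined on $\overline{\mathrm{Der}}\,\mathcal O$ and makes it a Lie algebra, and $\mathrm{Der}_w\mathcal O$ is a Lie subalgebra of $\overline{\mathrm{Der}}\,\mathcal O$.
   Context: $\mathcal I$ is a finite index set, $\mathcal O=\mathbb C[X^{a,n}]_{(a,n)\in\mathcal I\times\mathbb Z}$, $D_{a,n}=\partial/\partial X^{a,n}$. $\overline{\mathrm{Der}}\,\mathcal O=\prod_{(a,n)\in\mathcal I\times\mathbb Z}\mathcal O D_{a,n}$ is the space of possibly infinite formal sums $\sum_{(a,n)}P^{a,n}(X)D_{a,n}$. A collection $\{P^{a,n}\}_{(a,n)\in\mathcal I\times\mathbb Z}$ in $\mathcal O$ has widening gap if for every $K\ge1$, $P^{a,n}\in\mathbb C[X^{b,m}:|m|<|n|-K,\ b\in\mathcal I]$ for all $a$, for all but finitely many $n\in\mathbb Z$. $\mathrm{Der}_w\mathcal O\subset\overline{\mathrm{Der}}\,\mathcal O$ is the subspace of sums whose coefficient collection has widening gap. *)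

theory Defs
  imports Complex_Main "HOL-Library.Poly_Mapping" "HOL-Library.Groups_Big_Fun"
begin

text \<open>Variables X^{a,n} are indexed by pairs (a,n) in I x Z; the finite index set I
  is a type of class finite.  Monomials are finitely supported exponent maps,
  polynomials (the ring O) are finitely supported coefficient maps on monomials.\<close>

type_synonym 'i mon = "('i \<times> int) \<Rightarrow>\<^sub>0 nat"
type_synonym 'i pol = "'i mon \<Rightarrow>\<^sub>0 complex"

text \<open>An element of the completed derivation space: the family of coefficients
  P^{a,n}, representing the formal (possibly infinite) sum of P^{a,n} D_{a,n}.\<close>
type_synonym 'i der = "'i \<times> int \<Rightarrow> 'i pol"

definition const_pol :: "complex \<Rightarrow> 'i pol" where
  "const_pol c = Poly_Mapping.single 0 c"

definition pdiff :: "'i \<times> int \<Rightarrow> 'i pol \<Rightarrow> 'i pol" where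
  "pdiff v p = (\<Sum>m::'i mon\<in>Poly_Mapping.keys p.
      Poly_Mapping.single (m - Poly_Mapping.single v 1)
        (of_nat (Poly_Mapping.lookup m v) * Poly_Mapping.lookup p m))"

definition vars :: "'i pol \<Rightarrow> ('i \<times> int) set" where
  "vars p = (\<Union>m\<in>Poly_Mapping.keys p. Poly_Mapping.keys m)"

definition der_zero :: "'i der" where
  "der_zero = (\<lambda>v. 0)"

definition der_add :: "'i der \<Rightarrow> 'i der \<Rightarrow> 'i der" where
  "der_add P Q = (\<lambda>v. P v + Q v)"

definition der_scale :: "complex \<Rightarrow> 'i der \<Rightarrow> 'i der" where
  "der_scale c P = (\<lambda>v. const_pol c * P v)"

definition bracket_term :: "'i der \<Rightarrow> 'i der \<Rightarrow> 'i \<times> int \<Rightarrow> 'i \<times> int \<Rightarrow> 'i pol" where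
  "bracket_term P Q an bm = P bm * pdiff bm (Q an) - Q bm * pdiff bm (P an)"

text \<open>The bracket: coefficient of D_{a,n} is the sum over all (b,m) of the terms
  (a sum over the support; well-definedness = finiteness of that support).\<close>
definition der_bracket :: "'i der \<Rightarrow> 'i der \<Rightarrow> 'i der" where
  "der_bracket P Q = (\<lambda>an. Sum_any (bracket_term P Q an))"

definition widening_gap :: "'i der \<Rightarrow> bool" where
  "widening_gap P \<longleftrightarrow>
     (\<forall>K::int. K \<ge> 1 \<longrightarrow>
        finite {n::int. \<not> (\<forall>a. \<forall>(b, m) \<in> vars (P (a, n)). \<bar>m\<bar> < \<bar>n\<bar> - K)})"

definition Der_w :: "'i der set" where
  "Der_w = {P. widening_gap P}"

end

theory Submission imports Defs begin

abbreviation LK where "LK \<equiv> Poly_Mapping.lookup"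
abbreviation KS where "KS \<equiv> Poly_Mapping.keys"
abbreviation SG where "SG \<equiv> Poly_Mapping.single"

lemma mon_eq_iff:
  fixes m k :: "'a \<Rightarrow>\<^sub>0 nat"
  shows "(m = k + SG v 1) \<longleftrightarrow> (LK m v \<ge> 1 \<and> m - SG v 1 = k)"
proof
  assume "m = k + SG v 1" then show "LK m v \<ge> 1 \<and> m - SG v 1 = k"
    by (auto simp: poly_mapping_eq_iff fun_eq_iff lookup_add lookup_minus lookup_single)
next
  assume a: "LK m v \<ge> 1 \<and> m - SG v 1 = k"
  show "m = k + SG v 1"
  proof (rule poly_mapping_eqI)
    fix x
    have "LK k x = LK m x - (if v = x then 1 else 0)" using a
      by (auto simp: lookup_minus lookup_single)
    then show "LK m x = LK (k + SG v 1) x" using a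
      by (auto simp: lookup_add lookup_single)
  qed
qed

lemma lookup_pdiff:
  "LK (pdiff v p) k = of_nat (LK k v + 1) * LK p (k + SG v 1)"
proof -
  have "LK (pdiff v p) k = (\<Sum>m\<in>KS p. if m - SG v 1 = k then of_nat (LK m v) * LK p m else 0)"
    unfolding pdiff_def lookup_sum by (simp add: lookup_single when_def)
  also have "\<dots> = (\<Sum>m\<in>KS p. if m = k + SG v 1 then of_nat (LK m v) * LK p m else 0)"
    apply (rule sum.cong[OF refl])
    using mon_eq_iff[of _ k v] by (auto simp: in_keys_iff)
  also have "\<dots> = of_nat (LK k v + 1) * LK p (k + SG v 1)"
    by (simp add: in_keys_iff lookup_add)
  finally show ?thesis .
qed

lemma pdiff_add: "pdiff v (p + q) = pdiff v p + pdiff v q"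
  by (rule poly_mapping_eqI) (simp add: lookup_pdiff lookup_add algebra_simps)

lemma pdiff_zero[simp]: "pdiff v 0 = 0"
  by (rule poly_mapping_eqI) (simp add: lookup_pdiff)

lemma pdiff_minus: "pdiff v (p - q) = pdiff v p - pdiff v q"
  by (rule poly_mapping_eqI) (simp add: lookup_pdiff lookup_minus algebra_simps)

lemma pdiff_uminus: "pdiff v (- p) = - pdiff v p"
  by (rule poly_mapping_eqI) (simp add: lookup_pdiff)

lemma pdiff_sum: "pdiff v (sum f S) = (\<Sum>s\<in>S. pdiff v (f s))"
  by (induction S rule: infinite_finite_induct) (auto simp: pdiff_add)

lemma pdiff_comm: "pdiff u (pdiff v p) = pdiff v (pdiff u p)"
  by (rule poly_mapping_eqI, cases "u = v") (auto simp: lookup_pdiff lookup_add lookup_single when_def algebra_simps)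

lemma mon_sub_add:
  fixes m n :: "'a \<Rightarrow>\<^sub>0 nat"
  assumes "LK m v \<ge> 1"
  shows "m + n - SG v 1 = (m - SG v 1) + n"
  by (rule poly_mapping_eqI) (use assms in \<open>auto simp: lookup_add lookup_minus lookup_single when_def\<close>)

lemma pdiff_single: "pdiff v (SG m a) = SG (m - SG v 1) (of_nat (LK m v) * a)"
proof (rule poly_mapping_eqI)
  fix k
  show "LK (pdiff v (SG m a)) k = LK (SG (m - SG v 1) (of_nat (LK m v) * a)) k"
  proof (cases "LK m v \<ge> 1")
    case True
    then show ?thesis using mon_eq_iff[of m k v]
      by (auto simp: lookup_pdiff lookup_single when_def lookup_add lookup_minus)
  next
    case False
    then have "m \<noteq> k + SG v 1" using mon_eq_iff[of m k v] by auto
    then show ?thesis using False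
      by (auto simp: lookup_pdiff lookup_single when_def)
  qed
qed

lemma pdiff_mult_single:
  "pdiff v (SG m a * SG n b) = pdiff v (SG m a) * SG n b + SG m a * pdiff v (SG n b)"
proof -
  have l: "SG (m - SG v 1 + n) (of_nat (LK m v) * a * b) = SG (m + n - SG v 1) (of_nat (LK m v) * a * b)"
  proof (cases "LK m v \<ge> 1")
    case True then show ?thesis by (simp only: mon_sub_add[OF True])
  next
    case False then have "LK m v = 0" by simp
    then show ?thesis by simp
  qed
  have r: "SG (m + (n - SG v 1)) (a * (of_nat (LK n v) * b)) = SG (m + n - SG v 1) (of_nat (LK n v) * a * b)"
  proof (cases "LK n v \<ge> 1")
    case True then show ?thesis using mon_sub_add[OF True, of m] by (simp add: add.commute mult.commute mult.left_commute)
  next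
    case False then have "LK n v = 0" by simp
    then show ?thesis by simp
  qed
  have "pdiff v (SG m a * SG n b) = SG (m + n - SG v 1) (of_nat (LK m v) * a * b) + SG (m + n - SG v 1) (of_nat (LK n v) * a * b)"
    by (simp add: mult_single pdiff_single lookup_add single_add[symmetric] algebra_simps)
  moreover have "pdiff v (SG m a) * SG n b + SG m a * pdiff v (SG n b) = SG (m - SG v 1 + n) (of_nat (LK m v) * a * b) + SG (m + (n - SG v 1)) (a * (of_nat (LK n v) * b))"
    by (simp only: mult_single pdiff_single)
  ultimately show ?thesis by (simp only: l r)
qed

lemma poly_expand: "p = (\<Sum>m\<in>KS p. SG m (LK p m))"
  by (rule poly_mapping_eqI) (simp add: lookup_sum lookup_single when_def in_keys_iff)

lemma pdiff_mult: "pdiff v (p * q) = pdiff v p * q + p * pdiff v (q :: 'i pol)"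
proof -
  have "pdiff v (p * q) = pdiff v ((\<Sum>m\<in>KS p. SG m (LK p m)) * (\<Sum>n\<in>KS q. SG n (LK q n)))"
    using poly_expand[of p] poly_expand[of q] by simp
  also have "\<dots> = (\<Sum>m\<in>KS p. \<Sum>n\<in>KS q. pdiff v (SG m (LK p m) * SG n (LK q n)))"
    by (simp add: sum_product pdiff_sum)
  also have "\<dots> = (\<Sum>m\<in>KS p. \<Sum>n\<in>KS q. pdiff v (SG m (LK p m)) * SG n (LK q n)
        + SG m (LK p m) * pdiff v (SG n (LK q n)))"
    by (simp add: pdiff_mult_single)
  also have "\<dots> = pdiff v (\<Sum>m\<in>KS p. SG m (LK p m)) * (\<Sum>n\<in>KS q. SG n (LK q n))
      + (\<Sum>m\<in>KS p. SG m (LK p m)) * pdiff v (\<Sum>n\<in>KS q. SG n (LK q n))"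
    by (simp add: sum_product pdiff_sum sum.distrib)
  finally show ?thesis using poly_expand[of p] poly_expand[of q] by simp
qed

lemma pdiff_const[simp]: "pdiff v (const_pol c) = 0"
  by (simp add: const_pol_def pdiff_single)

lemma pdiff_const_mult: "pdiff v (const_pol c * p) = const_pol c * pdiff v p"
  by (simp add: pdiff_mult)

lemma finite_vars[simp]: "finite (vars p)"
  by (simp add: vars_def)

lemma pdiff_notin_vars: "v \<notin> vars p \<Longrightarrow> pdiff v p = 0"
proof (rule poly_mapping_eqI)
  fix k assume v: "v \<notin> vars p"
  have "LK p (k + SG v 1) = 0"
  proof (rule ccontr)
    assume "LK p (k + SG v 1) \<noteq> 0"
    then have "k + SG v 1 \<in> KS p" by (simp add: in_keys_iff)
    moreover have "v \<in> KS (k + SG v 1)" by (simp add: in_keys_iff lookup_add)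
    ultimately show False using v by (auto simp: vars_def)
  qed
  then show "LK (pdiff v p) k = LK 0 k" by (simp add: lookup_pdiff)
qed

lemma keys_mon_add: "KS ((a::'a \<Rightarrow>\<^sub>0 nat) + b) \<subseteq> KS a \<union> KS b"
  by (auto simp: in_keys_iff lookup_add)

lemma vars_add: "vars (p + q) \<subseteq> vars p \<union> vars q"
  unfolding vars_def using keys_add[of p q] by auto

lemma vars_diff: "vars (p - q) \<subseteq> vars p \<union> vars q"
  unfolding vars_def using keys_diff[of p q] by auto

lemma vars_zero[simp]: "vars 0 = {}"
  by (simp add: vars_def)

lemma vars_mult: "vars (p * q) \<subseteq> vars p \<union> vars (q :: 'i pol)"
proof
  fix x assume "x \<in> vars (p * q)"
  then obtain m where m: "m \<in> KS (p * q)" "x \<in> KS m" by (auto simp: vars_def)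
  then obtain a b where ab: "m = a + b" "a \<in> KS p" "b \<in> KS q" using keys_mult[of p q] by blast
  then have "x \<in> KS a \<or> x \<in> KS b" using m(2) keys_mon_add[of a b] by blast
  then show "x \<in> vars p \<union> vars q" using ab by (auto simp: vars_def)
qed

lemma vars_const: "vars (const_pol c) = {}"
  by (simp add: vars_def const_pol_def)

lemma vars_pdiff: "vars (pdiff v p) \<subseteq> vars p"
proof
  fix x assume "x \<in> vars (pdiff v p)"
  then obtain k where k: "k \<in> KS (pdiff v p)" "x \<in> KS k" by (auto simp: vars_def)
  then have "LK p (k + SG v 1) \<noteq> 0" by (auto simp: in_keys_iff lookup_pdiff)
  then have "k + SG v 1 \<in> KS p" by (simp add: in_keys_iff)
  moreover have "x \<in> KS (k + SG v 1)" using k(2) by (simp add: in_keys_iff lookup_add)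
  ultimately show "x \<in> vars p" by (auto simp: vars_def)
qed

lemma vars_sum: "vars (sum f S) \<subseteq> (\<Union>s\<in>S. vars (f s))"
proof (induction S rule: infinite_finite_induct)
  case (insert x F)
  then show ?case using vars_add[of "f x" "sum f F"] by auto
qed auto

definition act :: "'i der \<Rightarrow> 'i pol \<Rightarrow> 'i pol" where
  "act P f = (\<Sum>b\<in>vars f. P b * pdiff b f)"

lemma act_superset:
  assumes "finite S" "vars f \<subseteq> S"
  shows "act P f = (\<Sum>b\<in>S. P b * pdiff b f)"
  unfolding act_def
proof (rule sum.mono_neutral_left)
  show "\<forall>i\<in>S - vars f. P i * pdiff i f = 0" by (auto simp: pdiff_notin_vars)
qed (use assms in auto)

lemma act_add: "act P (f + g) = act P f + act P g"
proof -
  let ?S = "vars f \<union> vars g"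
  have "act P (f + g) = (\<Sum>b\<in>?S. P b * pdiff b (f + g))"
    using vars_add by (intro act_superset) auto
  also have "\<dots> = (\<Sum>b\<in>?S. P b * pdiff b f) + (\<Sum>b\<in>?S. P b * pdiff b g)"
    by (simp add: pdiff_add distrib_left sum.distrib)
  also have "\<dots> = act P f + act P g"
    by (subst (1 2) act_superset[of ?S]) auto
  finally show ?thesis .
qed

lemma act_diff: "act P (f - g) = act P f - act P g"
proof -
  let ?S = "vars f \<union> vars g"
  have "act P (f - g) = (\<Sum>b\<in>?S. P b * pdiff b (f - g))"
    using vars_diff by (intro act_superset) auto
  also have "\<dots> = (\<Sum>b\<in>?S. P b * pdiff b f) - (\<Sum>b\<in>?S. P b * pdiff b g)"
    by (simp add: pdiff_minus right_diff_distrib sum_subtractf)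
  also have "\<dots> = act P f - act P g"
    by (subst (1 2) act_superset[of ?S]) auto
  finally show ?thesis .
qed

lemma act_const_mult: "act P (const_pol c * f) = const_pol c * act P f"
proof -
  have "act P (const_pol c * f) = (\<Sum>b\<in>vars f. P b * pdiff b (const_pol c * f))"
    using vars_mult[of "const_pol c" f] vars_const by (intro act_superset) auto
  also have "\<dots> = const_pol c * act P f"
    by (simp add: act_def pdiff_const_mult sum_distrib_left mult.left_commute)
  finally show ?thesis .
qed

lemma act_der_add: "act (der_add P Q) f = act P f + act Q f"
  by (simp add: act_def der_add_def distrib_right sum.distrib)

lemma act_der_scale: "act (der_scale c P) f = const_pol c * act P f"
  by (simp add: act_def der_scale_def sum_distrib_left algebra_simps)

lemma act_der_zero[simp]: "act der_zero f = 0"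
  by (simp add: act_def der_zero_def)

lemma vars_act: "vars (act P f) \<subseteq> vars f \<union> (\<Union>b\<in>vars f. vars (P b))"
proof -
  have "vars (act P f) \<subseteq> (\<Union>b\<in>vars f. vars (P b * pdiff b f))"
    unfolding act_def by (rule vars_sum)
  also have "\<dots> \<subseteq> vars f \<union> (\<Union>b\<in>vars f. vars (P b))"
  proof (rule UN_least)
    fix b assume "b \<in> vars f"
    then show "vars (P b * pdiff b f) \<subseteq> vars f \<union> (\<Union>b\<in>vars f. vars (P b))"
      using vars_mult[of "P b" "pdiff b f"] vars_pdiff[of b f] by blast
  qed
  finally show ?thesis .
qed

lemma bracket_act: "der_bracket P Q an = act P (Q an) - act Q (P an)"
proof -
  let ?S = "vars (Q an) \<union> vars (P an)"
  have sub: "{bm. bracket_term P Q an bm \<noteq> 0} \<subseteq> ?S"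
  proof -
    have "bm \<notin> vars (Q an) \<union> vars (P an) \<Longrightarrow> bracket_term P Q an bm = 0" for bm
      by (simp add: bracket_term_def pdiff_notin_vars)
    then show ?thesis by blast
  qed
  have "der_bracket P Q an = (\<Sum>bm\<in>?S. bracket_term P Q an bm)"
    unfolding der_bracket_def by (rule Sum_any.expand_superset) (use sub in auto)
  also have "\<dots> = (\<Sum>b\<in>?S. P b * pdiff b (Q an)) - (\<Sum>b\<in>?S. Q b * pdiff b (P an))"
    by (simp add: bracket_term_def sum_subtractf)
  also have "\<dots> = act P (Q an) - act Q (P an)"
    by (subst (1 2) act_superset[of ?S]) auto
  finally show ?thesis .
qed

lemma bracket_finite: "finite {bm. bracket_term P Q an bm \<noteq> 0}"
proof -
  have "{bm. bracket_term P Q an bm \<noteq> 0} \<subseteq> vars (Q an) \<union> vars (P an)"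
  proof -
    have "bm \<notin> vars (Q an) \<union> vars (P an) \<Longrightarrow> bracket_term P Q an bm = 0" for bm
      by (simp add: bracket_term_def pdiff_notin_vars)
    then show ?thesis by blast
  qed
  then show ?thesis by (rule finite_subset) auto
qed

lemma act_commutator: "act (der_bracket P Q) f = act P (act Q f) - act Q (act P f)"
proof -
  define V where "V = vars f"
  define W where "W = V \<union> (\<Union>b\<in>V. vars (P b) \<union> vars (Q b))"
  have fW: "finite W" by (simp add: W_def V_def)
  have VW: "vars f \<subseteq> W" by (auto simp: W_def V_def)
  have QW: "vars (act Q f) \<subseteq> W" using vars_act[of Q f] by (auto simp: W_def V_def)
  have PW: "vars (act P f) \<subseteq> W" using vars_act[of P f] by (auto simp: W_def V_def)
  define A where "A c b = P c * pdiff c (Q b) * pdiff b f" for c b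
  define B where "B c b = Q c * pdiff c (P b) * pdiff b f" for c b
  define C where "C c b = P c * Q b * pdiff c (pdiff b f)" for c b
  have e1: "act P (act Q f) = (\<Sum>c\<in>W. \<Sum>b\<in>W. A c b) + (\<Sum>c\<in>W. \<Sum>b\<in>W. C c b)"
  proof -
    have "act P (act Q f) = (\<Sum>c\<in>W. P c * pdiff c (\<Sum>b\<in>W. Q b * pdiff b f))"
      using act_superset[OF fW QW] act_superset[OF fW VW, of Q] by simp
    also have "\<dots> = (\<Sum>c\<in>W. \<Sum>b\<in>W. A c b + C c b)"
      by (simp add: pdiff_sum pdiff_mult sum_distrib_left A_def C_def distrib_left mult.assoc)
    finally show ?thesis by (simp add: sum.distrib)
  qed
  have e2: "act Q (act P f) = (\<Sum>c\<in>W. \<Sum>b\<in>W. B c b) + (\<Sum>c\<in>W. \<Sum>b\<in>W. C c b)"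
  proof -
    have "act Q (act P f) = (\<Sum>c\<in>W. Q c * pdiff c (\<Sum>b\<in>W. P b * pdiff b f))"
      using act_superset[OF fW PW] act_superset[OF fW VW, of P] by simp
    also have "\<dots> = (\<Sum>c\<in>W. \<Sum>b\<in>W. B c b + C b c)"
      unfolding pdiff_sum sum_distrib_left
    proof (intro sum.cong refl)
      fix c b
      show "Q c * pdiff c (P b * pdiff b f) = B c b + C b c"
        by (simp add: pdiff_mult B_def C_def pdiff_comm[of b c f] algebra_simps)
    qed
    also have "\<dots> = (\<Sum>c\<in>W. \<Sum>b\<in>W. B c b) + (\<Sum>c\<in>W. \<Sum>b\<in>W. C b c)"
      by (simp add: sum.distrib)
    also have "(\<Sum>c\<in>W. \<Sum>b\<in>W. C b c) = (\<Sum>c\<in>W. \<Sum>b\<in>W. C c b)"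
      by (rule sum.swap)
    finally show ?thesis .
  qed
  have e3: "act (der_bracket P Q) f = (\<Sum>c\<in>W. \<Sum>b\<in>W. A c b) - (\<Sum>c\<in>W. \<Sum>b\<in>W. B c b)"
  proof -
    have "act (der_bracket P Q) f = (\<Sum>b\<in>W. der_bracket P Q b * pdiff b f)"
      by (rule act_superset[OF fW VW])
    also have "\<dots> = (\<Sum>b\<in>W. \<Sum>c\<in>W. A c b - B c b)"
    proof (rule sum.cong[OF refl])
      fix b assume "b \<in> W"
      show "der_bracket P Q b * pdiff b f = (\<Sum>c\<in>W. A c b - B c b)"
      proof (cases "b \<in> V")
        case True
        have w1: "vars (Q b) \<subseteq> W" and w2: "vars (P b) \<subseteq> W" using True by (auto simp: W_def)
        have "der_bracket P Q b = act P (Q b) - act Q (P b)" by (rule bracket_act)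
        also have "\<dots> = (\<Sum>c\<in>W. P c * pdiff c (Q b)) - (\<Sum>c\<in>W. Q c * pdiff c (P b))"
          using act_superset[OF fW w1, of P] act_superset[OF fW w2, of Q] by simp
        finally have "der_bracket P Q b = (\<Sum>c\<in>W. P c * pdiff c (Q b)) - (\<Sum>c\<in>W. Q c * pdiff c (P b))" .
        then show ?thesis
          by (simp add: A_def B_def sum_subtractf sum_distrib_right left_diff_distrib)
      next
        case False
        then have "pdiff b f = 0" by (simp add: V_def pdiff_notin_vars)
        then show ?thesis by (simp add: A_def B_def)
      qed
    qed
    also have "\<dots> = (\<Sum>c\<in>W. \<Sum>b\<in>W. A c b) - (\<Sum>c\<in>W. \<Sum>b\<in>W. B c b)"
      by (simp only: sum_subtractf sum.swap[of A W W] sum.swap[of B W W])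
    finally show ?thesis .
  qed
  show ?thesis using e1 e2 e3 by simp
qed

definition gapset :: "'i der \<Rightarrow> int \<Rightarrow> int set" where
  "gapset P K = {n::int. \<not> (\<forall>a. \<forall>(b, m) \<in> vars (P (a, n)). \<bar>m\<bar> < \<bar>n\<bar> - K)}"

lemma widening_gap_iff: "widening_gap P \<longleftrightarrow> (\<forall>K::int. K \<ge> 1 \<longrightarrow> finite (gapset P K))"
  unfolding widening_gap_def gapset_def ..

lemma not_in_gapset: "n \<notin> gapset P K \<Longrightarrow> x \<in> vars (P (a, n)) \<Longrightarrow> \<bar>snd x\<bar> < \<bar>n\<bar> - K"
  unfolding gapset_def by (cases x) fastforce

lemma in_gapsetI: "n \<in> gapset P K \<Longrightarrow> \<exists>a. \<exists>x \<in> vars (P (a, n)). \<not> \<bar>snd x\<bar> < \<bar>n\<bar> - K"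
  unfolding gapset_def by fastforce

lemma vars_der_add: "vars (der_add P Q v) \<subseteq> vars (P v) \<union> vars (Q v)"
  by (simp add: der_add_def vars_add)

lemma vars_der_scale: "vars (der_scale c P v) \<subseteq> vars (P v)"
  using vars_mult[of "const_pol c" "P v"] by (simp add: der_scale_def vars_const)

lemma Der_w_zero: "(der_zero :: 'i der) \<in> Der_w"
  by (simp add: Der_w_def widening_gap_iff gapset_def der_zero_def)

lemma Der_w_add: "P \<in> Der_w \<Longrightarrow> Q \<in> Der_w \<Longrightarrow> der_add P Q \<in> Der_w"
  unfolding Der_w_def widening_gap_iff
proof (intro CollectI allI impI)
  fix K :: int assume P: "P \<in> {P. \<forall>K\<ge>1. finite (gapset P K)}" and Q: "Q \<in> {P. \<forall>K\<ge>1. finite (gapset P K)}" and K: "1 \<le> K"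
  have "gapset (der_add P Q) K \<subseteq> gapset P K \<union> gapset Q K"
  proof
    fix n assume "n \<in> gapset (der_add P Q) K"
    then obtain a x where x: "x \<in> vars (der_add P Q (a, n))" "\<not> \<bar>snd x\<bar> < \<bar>n\<bar> - K"
      using in_gapsetI by blast
    show "n \<in> gapset P K \<union> gapset Q K"
    proof (rule ccontr)
      assume "\<not> ?thesis"
      then have "n \<notin> gapset P K" "n \<notin> gapset Q K" by auto
      moreover have "x \<in> vars (P (a, n)) \<or> x \<in> vars (Q (a, n))" using x(1) vars_der_add by blast
      ultimately show False using x(2) not_in_gapset[of n P K x a] not_in_gapset[of n Q K x a] by blast
    qed
  qed
  then show "finite (gapset (der_add P Q) K)" using P Q K by (auto intro: finite_subset)
qed

lemma Der_w_scale: "P \<in> Der_w \<Longrightarrow> der_scale c P \<in> Der_w"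
  unfolding Der_w_def widening_gap_iff
proof (intro CollectI allI impI)
  fix K :: int assume P: "P \<in> {P. \<forall>K\<ge>1. finite (gapset P K)}" and K: "1 \<le> K"
  have "gapset (der_scale c P) K \<subseteq> gapset P K"
  proof
    fix n assume "n \<in> gapset (der_scale c P) K"
    then obtain a x where x: "x \<in> vars (der_scale c P (a, n))" "\<not> \<bar>snd x\<bar> < \<bar>n\<bar> - K"
      using in_gapsetI by blast
    show "n \<in> gapset P K"
    proof (rule ccontr)
      assume "n \<notin> gapset P K"
      moreover have "x \<in> vars (P (a, n))" using x(1) vars_der_scale by blast
      ultimately show False using x(2) not_in_gapset[of n P K x a] by blast
    qed
  qed
  then show "finite (gapset (der_scale c P) K)" using P K by (auto intro: finite_subset)
qed

lemma act_bound:
  fixes X :: "'i der" and f :: "'i pol" and F :: "int set" and C N :: int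
  assumes f: "\<forall>x\<in>vars f. \<bar>snd x\<bar> < N"
    and X1: "\<And>b m x. m \<notin> F \<Longrightarrow> x \<in> vars (X (b, m)) \<Longrightarrow> \<bar>snd x\<bar> < \<bar>m\<bar> - 1"
    and X2: "\<And>b m x. m \<in> F \<Longrightarrow> x \<in> vars (X (b, m)) \<Longrightarrow> \<bar>snd x\<bar> \<le> C"
    and CN: "C < N"
  shows "\<forall>x\<in>vars (act X f). \<bar>snd x\<bar> < N"
proof
  fix x assume "x \<in> vars (act X f)"
  then consider "x \<in> vars f" | y where "y \<in> vars f" "x \<in> vars (X y)"
    using vars_act[of X f] by blast
  then show "\<bar>snd x\<bar> < N"
  proof cases
    case 1 then show ?thesis using f by blast
  next
    case (2 y)
    obtain b m where y: "y = (b, m)" by (cases y)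
    have "\<bar>m\<bar> < N" using f 2(1) y by auto
    then show ?thesis using X1[where b=b and m=m and x=x] X2[where b=b and m=m and x=x] 2(2) y CN by (cases "m \<in> F") auto
  qed
qed

lemma finite_bound: "finite S \<Longrightarrow> \<exists>C::int. \<forall>x\<in>S. f x \<le> C"
  by (rule exI[of _ "Max (f ` S \<union> {0})"]) auto

lemma Der_w_bracket:
  assumes P: "P \<in> (Der_w :: ('i::finite) der set)" and Q: "Q \<in> Der_w"
  shows "der_bracket P Q \<in> Der_w"
  unfolding Der_w_def widening_gap_iff
proof (intro CollectI allI impI)
  fix K :: int assume K: "1 \<le> K"
  have gP: "\<And>K. K \<ge> 1 \<Longrightarrow> finite (gapset P K)" and gQ: "\<And>K. K \<ge> 1 \<Longrightarrow> finite (gapset Q K)"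
    using P Q by (auto simp: Der_w_def widening_gap_iff)
  define F where "F = gapset P 1 \<union> gapset Q 1"
  have fF: "finite F" using gP gQ by (simp add: F_def)
  define B where "B = (\<Union>a. \<Union>m\<in>F. vars (P (a, m)) \<union> vars (Q (a, m)))"
  have fB: "finite B" using fF by (simp add: B_def)
  obtain C where C: "\<forall>x\<in>B. \<bar>snd x\<bar> \<le> C" using finite_bound[OF fB, of "\<lambda>x. \<bar>snd x\<bar>"] by blast
  have sub: "gapset (der_bracket P Q) K \<subseteq> gapset P K \<union> gapset Q K \<union> {-(C + K)..C + K}"
  proof
    fix n assume n: "n \<in> gapset (der_bracket P Q) K"
    show "n \<in> gapset P K \<union> gapset Q K \<union> {-(C + K)..C + K}"
    proof (rule ccontr)
      assume "\<not> ?thesis"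
      then have nP: "n \<notin> gapset P K" and nQ: "n \<notin> gapset Q K" and nC: "C < \<bar>n\<bar> - K" by auto
      obtain a x where x: "x \<in> vars (der_bracket P Q (a, n))" "\<not> \<bar>snd x\<bar> < \<bar>n\<bar> - K"
        using in_gapsetI[OF n] by blast
      have b1: "\<forall>x\<in>vars (act P (Q (a, n))). \<bar>snd x\<bar> < \<bar>n\<bar> - K"
      proof (rule act_bound[where F = F and C = C])
        show "\<forall>x\<in>vars (Q (a, n)). \<bar>snd x\<bar> < \<bar>n\<bar> - K" using not_in_gapset[OF nQ] by blast
        show "\<And>b m x. m \<notin> F \<Longrightarrow> x \<in> vars (P (b, m)) \<Longrightarrow> \<bar>snd x\<bar> < \<bar>m\<bar> - 1"
          using not_in_gapset by (auto simp: F_def)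
        show "\<And>b m x. m \<in> F \<Longrightarrow> x \<in> vars (P (b, m)) \<Longrightarrow> \<bar>snd x\<bar> \<le> C"
          using C by (auto simp: B_def)
      qed (use nC in simp)
      have b2: "\<forall>x\<in>vars (act Q (P (a, n))). \<bar>snd x\<bar> < \<bar>n\<bar> - K"
      proof (rule act_bound[where F = F and C = C])
        show "\<forall>x\<in>vars (P (a, n)). \<bar>snd x\<bar> < \<bar>n\<bar> - K" using not_in_gapset[OF nP] by blast
        show "\<And>b m x. m \<notin> F \<Longrightarrow> x \<in> vars (Q (b, m)) \<Longrightarrow> \<bar>snd x\<bar> < \<bar>m\<bar> - 1"
          using not_in_gapset by (auto simp: F_def)
        show "\<And>b m x. m \<in> F \<Longrightarrow> x \<in> vars (Q (b, m)) \<Longrightarrow> \<bar>snd x\<bar> \<le> C"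
          using C by (auto simp: B_def)
      qed (use nC in simp)
      have "x \<in> vars (act P (Q (a, n))) \<union> vars (act Q (P (a, n)))"
      proof -
        have "vars (der_bracket P Q (a, n)) \<subseteq> vars (act P (Q (a, n))) \<union> vars (act Q (P (a, n)))"
          unfolding bracket_act by (rule vars_diff)
        then show ?thesis using x(1) by blast
      qed
      then show False using b1 b2 x(2) by blast
    qed
  qed
  show "finite (gapset (der_bracket P Q) K)"
    by (rule finite_subset[OF sub]) (use gP gQ K in auto)
qed

theorem lemma3p5:
  fixes dummy :: "'i::finite itself"
  shows
    \<comment> \<open>well-definedness: each coefficient is a finite sum\<close>
    "(\<forall>(P::'i der) Q an. finite {bm. bracket_term P Q an bm \<noteq> 0})
     \<comment> \<open>bilinearity\<close>
     \<and> (\<forall>(P::'i der) Q R. der_bracket (der_add P Q) R = der_add (der_bracket P R) (der_bracket Q R))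
     \<and> (\<forall>(P::'i der) Q R. der_bracket P (der_add Q R) = der_add (der_bracket P Q) (der_bracket P R))
     \<and> (\<forall>c (P::'i der) Q. der_bracket (der_scale c P) Q = der_scale c (der_bracket P Q))
     \<and> (\<forall>c (P::'i der) Q. der_bracket P (der_scale c Q) = der_scale c (der_bracket P Q))
     \<comment> \<open>alternating\<close>
     \<and> (\<forall>P::'i der. der_bracket P P = der_zero)
     \<comment> \<open>Jacobi identity\<close>
     \<and> (\<forall>(P::'i der) Q R.
          der_add (der_add (der_bracket P (der_bracket Q R)) (der_bracket Q (der_bracket R P)))
                  (der_bracket R (der_bracket P Q)) = der_zero)
     \<comment> \<open>Der_w is a Lie subalgebra\<close>
     \<and> (der_zero :: 'i der) \<in> Der_w
     \<and> (\<forall>P\<in>(Der_w :: 'i der set). \<forall>Q\<in>Der_w. der_add P Q \<in> Der_w)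
     \<and> (\<forall>c. \<forall>P\<in>(Der_w :: 'i der set). der_scale c P \<in> Der_w)
     \<and> (\<forall>P\<in>(Der_w :: 'i der set). \<forall>Q\<in>Der_w. der_bracket P Q \<in> Der_w)"
proof (intro conjI allI ballI)
  fix P Q :: "'i der" and an
  show "finite {bm. bracket_term P Q an bm \<noteq> 0}" by (rule bracket_finite)
next
  fix P Q R :: "'i der"
  show "der_bracket (der_add P Q) R = der_add (der_bracket P R) (der_bracket Q R)"
    by (rule ext) (simp add: bracket_act act_der_add, simp add: der_add_def act_add bracket_act)
next
  fix P Q R :: "'i der"
  show "der_bracket P (der_add Q R) = der_add (der_bracket P Q) (der_bracket P R)"
    by (rule ext) (simp add: bracket_act act_der_add, simp add: der_add_def act_add bracket_act)
next
  fix c and P Q :: "'i der"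
  show "der_bracket (der_scale c P) Q = der_scale c (der_bracket P Q)"
    by (rule ext) (simp add: bracket_act act_der_scale, simp add: der_scale_def act_const_mult right_diff_distrib bracket_act)
next
  fix c and P Q :: "'i der"
  show "der_bracket P (der_scale c Q) = der_scale c (der_bracket P Q)"
    by (rule ext) (simp add: bracket_act act_der_scale, simp add: der_scale_def act_const_mult right_diff_distrib bracket_act)
next
  fix P :: "'i der"
  show "der_bracket P P = der_zero"
    by (rule ext) (simp add: bracket_act der_zero_def)
next
  fix P Q R :: "'i der"
  show "der_add (der_add (der_bracket P (der_bracket Q R)) (der_bracket Q (der_bracket R P)))
                  (der_bracket R (der_bracket P Q)) = der_zero"
    by (rule ext) (simp add: der_add_def der_zero_def bracket_act act_commutator act_diff)
next
  show "(der_zero :: 'i der) \<in> Der_w" by (rule Der_w_zero)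
next
  fix P Q :: "'i der" assume "P \<in> Der_w" "Q \<in> Der_w"
  then show "der_add P Q \<in> Der_w" by (rule Der_w_add)
next
  fix c and P :: "'i der" assume "P \<in> Der_w"
  then show "der_scale c P \<in> Der_w" by (rule Der_w_scale)
next
  fix P Q :: "'i der" assume "P \<in> Der_w" "Q \<in> Der_w"
  then show "der_bracket P Q \<in> Der_w" by (rule Der_w_bracket)
qed

end
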